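(* Let $\Phi:D_n\to S_n$ be the homomorphism with $\Phi(s_{1'})=s_1$ and $\Phi(s_i)=s_i$ for $1\le i\le n-1$. If $\pi\in D_n$ is written as $\pi = w_{1}^{j_{1}} t_{2}^{i_{2}} w_{2}^{j_{2}} t_{3}^{i_{3}} \cdots w_{n-1}^{j_{n-1}} t_{n}^{i_{n}}$ with $0\le i_k\le k-1$, $0\le j_k\le 1$, then $\Phi(\pi)=t_2^{i_2}\cdot t_3^{i_3}\cdots t_n^{i_n}$, where on the right $t_k=s_1s_2\cdots s_{k-1}\in S_n$.
   Context: $D_n$ ($n\ge 2$) is the Coxeter group with generators $s_{1'},s_1,\dots,s_{n-1}$ and relations $s^2=1$, $(s_i s_{i+1})^3=1$, $(s_is_j)^2=1$ for $|i-j|\ge 2$, $(s_{1'}s_2)^3=1$, $(s_{1'}s_i)^2=1$ for $i\ne 2$. $S_n$ is the symmetric group with Coxeter generators $s_i=(i,i+1)$, $1\le i\le n-1$. In $D_n$, $t_k=s_1s_2\cdots s_{k-1}$ ($2\le k\le n$) and $w_k=s_k s_{k-1}\cdots s_2 s_1 s_{1'} s_2\cdots s_k$ ($1\le k\le n-1$). Every element of $D_n$ has a unique expression of the stated form. *)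

theory Defs
  imports "HOL-Combinatorics.Transposition"
begin

text \<open>Generators of D_n: Gp is s_{1'}, G i is s_i (1 \<le> i \<le> n-1).\<close>
datatype gen = Gp | G nat

definition valid_gen :: "nat \<Rightarrow> gen \<Rightarrow> bool" where
  "valid_gen n g = (case g of Gp \<Rightarrow> True | G i \<Rightarrow> 1 \<le> i \<and> i \<le> n - 1)"

inductive dn_rel :: "nat \<Rightarrow> gen list \<Rightarrow> gen list \<Rightarrow> bool" for n where
  sq: "valid_gen n g \<Longrightarrow> dn_rel n [g, g] []"
| braid: "1 \<le> i \<Longrightarrow> i + 1 \<le> n - 1 \<Longrightarrow>
     dn_rel n [G i, G (i+1), G i, G (i+1), G i, G (i+1)] []"
| comm: "1 \<le> i \<Longrightarrow> i \<le> n - 1 \<Longrightarrow> 1 \<le> j \<Longrightarrow> j \<le> n - 1 \<Longrightarrow> i + 2 \<le> j \<or> j + 2 \<le> i \<Longrightarrow>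
     dn_rel n [G i, G j, G i, G j] []"
| braid': "2 \<le> n - 1 \<Longrightarrow> dn_rel n [Gp, G 2, Gp, G 2, Gp, G 2] []"
| comm': "1 \<le> i \<Longrightarrow> i \<le> n - 1 \<Longrightarrow> i \<noteq> 2 \<Longrightarrow> dn_rel n [Gp, G i, Gp, G i] []"

text \<open>Two words represent the same element of D_n iff they are related by the
  congruence generated by the defining relations.\<close>
inductive dn_eq :: "nat \<Rightarrow> gen list \<Rightarrow> gen list \<Rightarrow> bool" for n where
  refl: "dn_eq n u u"
| sym: "dn_eq n u v \<Longrightarrow> dn_eq n v u"
| trans: "dn_eq n u v \<Longrightarrow> dn_eq n v w \<Longrightarrow> dn_eq n u w"
| rel: "dn_rel n a b \<Longrightarrow> dn_eq n (u @ a @ v) (u @ b @ v)"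

definition wpow :: "gen list \<Rightarrow> nat \<Rightarrow> gen list" where
  "wpow w j = concat (replicate j w)"

definition tD :: "nat \<Rightarrow> gen list" where
  "tD k = map G [1..<k]"

text \<open>w_k = s_k ... s_2 s_1 s_{1'} s_2 ... s_k\<close>
definition wD :: "nat \<Rightarrow> gen list" where
  "wD k = rev (map G [1..<k+1]) @ [Gp] @ map G [2..<k+1]"

definition normal_word :: "nat \<Rightarrow> (nat \<Rightarrow> nat) \<Rightarrow> (nat \<Rightarrow> nat) \<Rightarrow> gen list" where
  "normal_word n i j = concat (map (\<lambda>k. wpow (wD (k-1)) (j (k-1)) @ wpow (tD k) (i k)) [2..<n+1])"

text \<open>S_n: permutations of nat, product = composition, s_i = (i, i+1).\<close>
definition sS :: "nat \<Rightarrow> nat \<Rightarrow> nat" where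
  "sS i = Transposition.transpose i (i+1)"

fun phi_gen :: "gen \<Rightarrow> nat \<Rightarrow> nat" where
  "phi_gen Gp = sS 1"
| "phi_gen (G i) = sS i"

definition Phi :: "gen list \<Rightarrow> nat \<Rightarrow> nat" where
  "Phi w = foldr (\<circ>) (map phi_gen w) id"

definition tS :: "nat \<Rightarrow> nat \<Rightarrow> nat" where
  "tS k = foldr (\<circ>) (map sS [1..<k]) id"

end

theory Submission
  imports Defs
begin

lemma Phi_append: "Phi (u @ v) = Phi u \<circ> Phi v"
  by (induction u) (auto simp: Phi_def)

lemma Phi_Cons: "Phi (g # v) = phi_gen g \<circ> Phi v"
  by (simp add: Phi_def)

lemma Phi_Nil: "Phi [] = id"
  by (simp add: Phi_def)

lemma sS_apply: "sS a x = (if x = a then a+1 else if x = a+1 then a else x)"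
  by (simp add: sS_def transpose_def)

lemma sS_sq: "sS a \<circ> sS a = id"
  by (rule ext) (simp add: sS_apply)

lemma braid_S: "sS a (sS (a+1) (sS a (sS (a+1) (sS a (sS (a+1) x))))) = x"
proof -
  consider "x = a" | "x = a+1" | "x = a+2" | "x \<noteq> a \<and> x \<noteq> a+1 \<and> x \<noteq> a+2" by auto
  then show ?thesis by cases (simp_all add: sS_apply)
qed

lemma comm_S: "a \<noteq> b \<Longrightarrow> a \<noteq> b+1 \<Longrightarrow> b \<noteq> a+1 \<Longrightarrow> sS a (sS b (sS a (sS b x))) = x"
proof -
  assume h: "a \<noteq> b" "a \<noteq> b+1" "b \<noteq> a+1"
  consider "x = a" | "x = a+1" | "x = b" | "x = b+1" | "x \<noteq> a \<and> x \<noteq> a+1 \<and> x \<noteq> b \<and> x \<noteq> b+1" by auto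
  then show ?thesis by cases (use h in \<open>simp_all add: sS_apply\<close>)
qed

lemma Phi_rel: "dn_rel n a b \<Longrightarrow> Phi a = Phi b"
proof (induction rule: dn_rel.induct)
  case (sq g)
  then show ?case by (cases g) (auto simp: Phi_def sS_sq)
next
  case (braid i)
  then show ?case by (simp add: Phi_def fun_eq_iff braid_S[of i, simplified])
next
  case (comm i j)
  then show ?case by (simp add: Phi_def fun_eq_iff) (rule allI, rule comm_S; auto)
next
  case braid'
  then show ?case by (simp add: Phi_def fun_eq_iff) (metis braid_S[of 1] one_add_one One_nat_def)
next
  case (comm' i)
  show ?case
  proof (cases "i = 1")
    case True
    then show ?thesis by (simp add: Phi_def sS_sq)
  next
    case False
    then show ?thesis using comm' by (simp add: Phi_def fun_eq_iff) (rule allI, rule comm_S; auto)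
  qed
qed

lemma Phi_eq: "dn_eq n u v \<Longrightarrow> Phi u = Phi v"
  by (induction rule: dn_eq.induct) (auto simp: Phi_append Phi_rel)

lemma Phi_wpow: "Phi (wpow w m) = Phi w ^^ m"
  by (induction m) (simp_all add: wpow_def Phi_append Phi_Nil)

lemma Phi_tD: "Phi (tD k) = tS k"
  by (simp add: Phi_def tD_def tS_def comp_def o_def)

lemma wD_Suc: "k \<ge> 1 \<Longrightarrow> wD (Suc k) = G (Suc k) # wD k @ [G (Suc k)]"
  by (simp add: wD_def)

lemma Phi_wD: "k \<ge> 1 \<Longrightarrow> Phi (wD k) = id"
proof (induction k rule: dec_induct)
  case base
  then show ?case by (simp add: wD_def Phi_def sS_sq)
next
  case (step m)
  have "Phi (wD (Suc m)) = sS (Suc m) \<circ> Phi (wD m) \<circ> sS (Suc m)"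
    using step(1) by (simp add: wD_Suc Phi_Cons Phi_append Phi_Nil comp_assoc)
  then show ?case using step(3) by (simp add: sS_sq fun_eq_iff sS_apply)
qed

lemma Phi_normal_aux: "a \<ge> 2 \<Longrightarrow> Phi (concat (map (\<lambda>k. wpow (wD (k-1)) (j (k-1)) @ wpow (tD k) (i k)) [a..<a+m]))
   = foldr (\<circ>) (map (\<lambda>k. tS k ^^ i k) [a..<a+m]) id"
proof (induction m arbitrary: a)
  case 0
  then show ?case by (simp add: Phi_Nil)
next
  case (Suc m)
  have e: "[a..<a + Suc m] = a # [Suc a..<Suc a + m]" by (simp add: upt_conv_Cons)
  have "a - 1 \<ge> 1" using Suc.prems by auto
  then show ?case using Suc.IH[of "Suc a"] Suc.prems unfolding e
    by (simp add: Phi_append Phi_wpow Phi_wD Phi_tD)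
qed

lemma Phi_normal: "Phi (normal_word n i j) = foldr (\<circ>) (map (\<lambda>k. tS k ^^ i k) [2..<n+1]) id"
  using Phi_normal_aux[of 2 j i "n - 1"] by (cases n) (simp_all add: normal_word_def)

theorem mainTheorem4:
  fixes n :: nat and i j :: "nat \<Rightarrow> nat" and \<pi> :: "gen list"
  assumes "n \<ge> 2"
    and "\<forall>k\<in>{2..n}. i k \<le> k - 1"
    and "\<forall>k\<in>{1..n-1}. j k \<le> 1"
    and "\<forall>g\<in>set \<pi>. valid_gen n g"
    and "dn_eq n \<pi> (normal_word n i j)"
  shows "Phi \<pi> = foldr (\<circ>) (map (\<lambda>k. tS k ^^ i k) [2..<n+1]) id"
  using Phi_eq[OF assms(5)] Phi_normal by simp

end
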